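(* Let $M$ be a Riemann surface and let $f,g$ be meromorphic functions on $M$ such that $g$, viewed as a holomorphic map $M\to\mathbb{CP}^1$, is an immersion. Then the holomorphic Legendrian map \[\mathscr B(f,g)=\big[dg: f\,dg-\tfrac12 g\,df: g\,dg:\tfrac12 df\big]:M\to\mathbb{CP}^3\] is an immersion.
   Context: The expression for $\mathscr B(f,g)$ is in homogeneous coordinates on $\mathbb{CP}^3$: in a local holomorphic coordinate $x$ on $M$ one writes $\mathscr B(f,g)=[g':fg'-\tfrac12 f'g: gg':\tfrac12 f']$ and clears poles/common zeros. It is tangent to the contact structure $\xi\subset T\mathbb{CP}^3$ determined by the homogeneous $1$-form $z_0dz_1-z_1dz_0+z_2dz_3-z_3dz_2$ on $\mathbb C^4$. *)

theory Defs
  imports "HOL-Complex_Analysis.Complex_Analysis"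
begin

definition riemann_surface :: "'a topology \<Rightarrow> ('a set \<times> ('a \<Rightarrow> complex)) set \<Rightarrow> bool" where
  "riemann_surface M A \<longleftrightarrow>
     Hausdorff_space M \<and> connected_space M \<and> topspace M \<noteq> {} \<and>
     \<Union>(fst ` A) = topspace M \<and>
     (\<forall>(U, \<phi>)\<in>A. openin M U \<and> open (\<phi> ` U) \<and>
        homeomorphic_map (subtopology M U) (top_of_set (\<phi> ` U)) \<phi>) \<and>
     (\<forall>(U, \<phi>)\<in>A. \<forall>(V, \<psi>)\<in>A.
        (\<psi> \<circ> inv_into U \<phi>) holomorphic_on (\<phi> ` (U \<inter> V)))"

definition in_chart :: "'a set \<Rightarrow> ('a \<Rightarrow> complex) \<Rightarrow> ('a \<Rightarrow> complex) \<Rightarrow> complex \<Rightarrow> complex" where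
  "in_chart U \<phi> f = f \<circ> inv_into U \<phi>"

text \<open>A meromorphic function on M (a holomorphic map to CP^1 not identically infinity):
  meromorphic in every chart.  Values at poles are irrelevant.\<close>
definition meromorphic_fun :: "'a topology \<Rightarrow> ('a set \<times> ('a \<Rightarrow> complex)) set \<Rightarrow> ('a \<Rightarrow> complex) \<Rightarrow> bool" where
  "meromorphic_fun M A f \<longleftrightarrow> (\<forall>(U, \<phi>)\<in>A. (in_chart U \<phi> f) meromorphic_on (\<phi> ` U))"

text \<open>Given meromorphic homogeneous coordinates v 0, ..., v n (in a local coordinate x near z),
  the map x |-> [v 0 x : ... : v n x] into CP^n (poles and common zeros cleared) is an
  immersion at z: there is a holomorphic lift w = h * v near z with w z \<noteq> 0, and in
  every standard affine chart {Z_i \<noteq> 0} of CP^n containing the image point the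
  differential of the affine coordinates w_j / w_i is nonzero (i.e. injective).\<close>
definition merom_immersion_at :: "nat \<Rightarrow> (nat \<Rightarrow> complex \<Rightarrow> complex) \<Rightarrow> complex \<Rightarrow> bool" where
  "merom_immersion_at n v z \<longleftrightarrow>
     (\<exists>r>0. \<exists>w h.
        (\<forall>k\<le>n. w k holomorphic_on ball z r) \<and>
        (\<forall>x\<in>ball z r - {z}. \<forall>k\<le>n. w k x = h x * v k x) \<and>
        (\<exists>k\<le>n. w k z \<noteq> 0) \<and>
        (\<forall>i\<le>n. w i z \<noteq> 0 \<longrightarrow> (\<exists>j\<le>n. deriv (\<lambda>x. w j x / w i x) z \<noteq> 0)))"

definition merom_immersion ::
  "'a topology \<Rightarrow> ('a set \<times> ('a \<Rightarrow> complex)) set \<Rightarrow> nat \<Rightarrow>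
   ('a set \<Rightarrow> ('a \<Rightarrow> complex) \<Rightarrow> nat \<Rightarrow> complex \<Rightarrow> complex) \<Rightarrow> bool" where
  "merom_immersion M A n V \<longleftrightarrow>
     (\<forall>(U, \<phi>)\<in>A. \<forall>p\<in>U. merom_immersion_at n (V U \<phi>) (\<phi> p))"

definition cp1_coords :: "('a \<Rightarrow> complex) \<Rightarrow> 'a set \<Rightarrow> ('a \<Rightarrow> complex) \<Rightarrow> nat \<Rightarrow> complex \<Rightarrow> complex" where
  "cp1_coords g U \<phi> k = (if k = 0 then in_chart U \<phi> g else (\<lambda>_. 1))"

definition B_coords :: "('a \<Rightarrow> complex) \<Rightarrow> ('a \<Rightarrow> complex) \<Rightarrow> 'a set \<Rightarrow> ('a \<Rightarrow> complex) \<Rightarrow> nat \<Rightarrow> complex \<Rightarrow> complex" where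
  "B_coords f g U \<phi> k =
     (let F = in_chart U \<phi> f; G = in_chart U \<phi> g in
      if k = 0 then (\<lambda>x. deriv G x)
      else if k = 1 then (\<lambda>x. F x * deriv G x - 1/2 * G x * deriv F x)
      else if k = 2 then (\<lambda>x. G x * deriv G x)
      else (\<lambda>x. 1/2 * deriv F x))"

end

theory Submission
  imports Defs
begin


definition Bexpr :: "(complex \<Rightarrow> complex) \<Rightarrow> (complex \<Rightarrow> complex) \<Rightarrow> nat \<Rightarrow> complex \<Rightarrow> complex" where
  "Bexpr F G k =
      (if k = 0 then (\<lambda>x. deriv G x)
      else if k = 1 then (\<lambda>x. F x * deriv G x - 1/2 * G x * deriv F x)
      else if k = 2 then (\<lambda>x. G x * deriv G x)
      else (\<lambda>x. 1/2 * deriv F x))"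

lemma B_coords_eq: "B_coords f g U \<phi> = Bexpr (in_chart U \<phi> f) (in_chart U \<phi> g)"
  by (auto simp: B_coords_def Bexpr_def Let_def fun_eq_iff)

definition imm_minor :: "nat \<Rightarrow> (nat \<Rightarrow> complex \<Rightarrow> complex) \<Rightarrow> complex \<Rightarrow> bool" where
  "imm_minor n v z \<longleftrightarrow>
     (\<exists>r>0. \<exists>w h.
        (\<forall>k\<le>n. w k holomorphic_on ball z r) \<and>
        (\<forall>x\<in>ball z r - {z}. \<forall>k\<le>n. w k x = h x * v k x) \<and>
        (\<exists>a\<le>n. \<exists>b\<le>n. w a z * deriv (w b) z - w b z * deriv (w a) z \<noteq> 0))"

lemma imm_minor_imp:
  assumes "imm_minor n v z"
  shows "merom_immersion_at n v z"
proof -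
  obtain r w h a b where r: "r > 0" and hol: "\<forall>k\<le>n. w k holomorphic_on ball z r"
    and eq: "\<forall>x\<in>ball z r - {z}. \<forall>k\<le>n. w k x = h x * v k x"
    and ab: "a \<le> n" "b \<le> n" and m: "w a z * deriv (w b) z - w b z * deriv (w a) z \<noteq> 0"
    using assms unfolding imm_minor_def by blast
  have D: "(w k has_field_derivative deriv (w k) z) (at z)" if "k \<le> n" for k
    using holomorphic_derivI[of "w k" "ball z r" z UNIV] hol that r by auto
  have ex: "\<exists>k\<le>n. w k z \<noteq> 0"
    using m ab by (cases "w a z = 0") auto
  have cond: "\<exists>j\<le>n. deriv (\<lambda>x. w j x / w i x) z \<noteq> 0" if i: "i \<le> n" "w i z \<noteq> 0" for i
  proof (rule ccontr)
    assume "\<not> ?thesis"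
    hence z: "deriv (\<lambda>x. w j x / w i x) z = 0" if "j \<le> n" for j using that by auto
    have e: "deriv (w j) z * w i z = w j z * deriv (w i) z" if "j \<le> n" for j
    proof -
      have "deriv (\<lambda>x. w j x / w i x) z = (deriv (w j) z * w i z - w j z * deriv (w i) z) / (w i z * w i z)"
        by (rule DERIV_imp_deriv, rule DERIV_divide) (use D that i in auto)
      thus ?thesis using z[OF that] i by auto
    qed
    have "w i z * (w a z * deriv (w b) z - w b z * deriv (w a) z) =
          w a z * (deriv (w b) z * w i z) - w b z * (deriv (w a) z * w i z)"
      by (simp add: algebra_simps)
    also have "\<dots> = 0" using e[OF ab(1)] e[OF ab(2)] by (simp add: algebra_simps)
    finally show False using m i by simp
  qed
  show ?thesis unfolding merom_immersion_at_def
    using r hol eq ex cond by blast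
qed

lemma ball_minus_nhds:
  assumes "x \<in> ball z r - {z}"
  shows "eventually (\<lambda>y. y \<in> ball z r - {z}) (nhds x)"
  using assms by (intro eventually_nhds_in_open) auto

lemma caseA_hol:
  assumes r: "r > 0" and hF: "Fh holomorphic_on ball z r" and hG: "Gh holomorphic_on ball z r"
    and d: "deriv Gh z \<noteq> 0"
    and eq: "\<forall>x\<in>ball z r - {z}. F x = Fh x \<and> G x = Gh x"
  shows "imm_minor 3 (Bexpr F G) z"
proof -
  have o: "open (ball z r)" by simp
  have dF: "deriv Fh holomorphic_on ball z r" "deriv Gh holomorphic_on ball z r"
    using hF hG by (auto intro: holomorphic_deriv)
  have hol: "\<forall>k\<le>3. Bexpr Fh Gh k holomorphic_on ball z r"
    using hF hG dF unfolding Bexpr_def by (auto intro!: holomorphic_intros)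
  have eqv: "\<forall>x\<in>ball z r - {z}. \<forall>k\<le>3. Bexpr Fh Gh k x = 1 * Bexpr F G k x"
  proof (intro ballI allI impI)
    fix x k assume x: "x \<in> ball z r - {z}"
    have ev: "eventually (\<lambda>y. F y = Fh y) (nhds x)" "eventually (\<lambda>y. G y = Gh y) (nhds x)"
      using ball_minus_nhds[OF x] by (auto elim!: eventually_mono simp: eq)
    have "deriv F x = deriv Fh x" "deriv G x = deriv Gh x"
      by (rule deriv_cong_ev[OF ev(1) refl], rule deriv_cong_ev[OF ev(2) refl])
    thus "Bexpr Fh Gh k x = 1 * Bexpr F G k x"
      using eq x by (auto simp: Bexpr_def)
  qed
  have z: "z \<in> ball z r" using r by simp
  have dd: "deriv (\<lambda>x. Gh x * deriv Gh x) z = Gh z * deriv (deriv Gh) z + deriv Gh z * deriv Gh z"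
    by (rule deriv_mult) (use holomorphic_on_imp_differentiable_at[OF _ o z] hG dF in auto)
  have m: "Bexpr Fh Gh 0 z * deriv (Bexpr Fh Gh 2) z - Bexpr Fh Gh 2 z * deriv (Bexpr Fh Gh 0) z
        = deriv Gh z ^ 3"
    by (simp add: Bexpr_def dd algebra_simps power3_eq_cube)
  show ?thesis unfolding imm_minor_def
    apply (rule exI[of _ r], intro conjI, fact r)
    apply (rule exI[of _ "Bexpr Fh Gh"], rule exI[of _ "\<lambda>_. 1"])
    using hol eqv m d by (intro conjI; (intro exI[of _ 0] exI[of _ 2])?) auto
qed



lemma caseA_pole:
  assumes r: "r > 0" and hc: "c holomorphic_on ball z r" and hG: "Gh holomorphic_on ball z r"
    and d: "deriv Gh z \<noteq> 0" and cz: "c z \<noteq> 0"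
    and eq: "\<forall>x\<in>ball z r - {z}. F x = c x / (x - z) ^ Suc m \<and> G x = Gh x"
  shows "imm_minor 3 (Bexpr F G) z"
proof -
  define K :: complex where "K = of_nat (Suc m)"
  have o: "open (ball z r)" by simp
  have z: "z \<in> ball z r" using r by simp
  have dF: "deriv c holomorphic_on ball z r" "deriv Gh holomorphic_on ball z r"
    "deriv (deriv c) holomorphic_on ball z r" "deriv (deriv Gh) holomorphic_on ball z r"
    using hc hG by (auto intro!: holomorphic_deriv)
  have DD: "\<And>f x. f holomorphic_on ball z r \<Longrightarrow> x \<in> ball z r \<Longrightarrow> (f has_field_derivative deriv f x) (at x)"
    using holomorphic_derivI o by blast
  define W :: "nat \<Rightarrow> complex \<Rightarrow> complex" where
    "W k = (if k = 0 then (\<lambda>x. (x - z) ^ Suc (Suc m) * deriv Gh x)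
      else if k = 1 then (\<lambda>x. (x - z) * c x * deriv Gh x - 1/2 * Gh x * (deriv c x * (x - z) - K * c x))
      else if k = 2 then (\<lambda>x. (x - z) ^ Suc (Suc m) * (Gh x * deriv Gh x))
      else (\<lambda>x. 1/2 * (deriv c x * (x - z) - K * c x)))" for k
  have hol: "\<forall>k\<le>3. W k holomorphic_on ball z r"
    using hc hG dF unfolding W_def by (auto intro!: holomorphic_intros)
  have eqv: "\<forall>x\<in>ball z r - {z}. \<forall>k\<le>3. W k x = (x - z) ^ Suc (Suc m) * Bexpr F G k x"
  proof (intro ballI allI impI)
    fix x k assume x: "x \<in> ball z r - {z}"
    have ev: "eventually (\<lambda>y. F y = c y / (y - z) ^ Suc m) (nhds x)" "eventually (\<lambda>y. G y = Gh y) (nhds x)"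
      using ball_minus_nhds[OF x] by (auto elim!: eventually_mono simp: eq)
    have xz: "x - z \<noteq> 0" using x by auto
    have "((\<lambda>y. c y / (y - z) ^ Suc m) has_field_derivative
           (deriv c x * (x - z) - K * c x) / (x - z) ^ Suc (Suc m)) (at x)"
    proof -
      define e where "e = x - z"
      have e0: "e \<noteq> 0" using xz e_def by simp
      have pw: "((\<lambda>y. (y - z) ^ Suc m) has_field_derivative of_nat (Suc m) * e ^ m) (at x)"
        using DERIV_power[OF DERIV_diff[OF DERIV_ident DERIV_const[of z]], of "Suc m" x]
        unfolding e_def by simp
      have "((\<lambda>y. c y / (y - z) ^ Suc m) has_field_derivative
           (deriv c x * (x - z) ^ Suc m - c x * (of_nat (Suc m) * e ^ m)) / ((x - z) ^ Suc m * (x - z) ^ Suc m)) (at x)"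
        by (rule DERIV_divide[OF DD[OF hc] pw]) (use x xz in auto)
      moreover have "(deriv c x * (x - z) ^ Suc m - c x * (of_nat (Suc m) * e ^ m)) / ((x - z) ^ Suc m * (x - z) ^ Suc m)
          = (deriv c x * (x - z) - K * c x) / (x - z) ^ Suc (Suc m)"
      proof -
        have "(deriv c x * e ^ Suc m - c x * (of_nat (Suc m) * e ^ m)) / (e ^ Suc m * e ^ Suc m)
            = (e ^ m * (deriv c x * e - K * c x)) / (e ^ m * e ^ Suc (Suc m))"
          by (simp add: K_def algebra_simps)
        also have "\<dots> = (deriv c x * e - K * c x) / e ^ Suc (Suc m)"
          using e0 by simp
        finally show ?thesis unfolding e_def .
      qed
      ultimately show ?thesis by simp
    qed
    hence dFx: "deriv F x = (deriv c x * (x - z) - K * c x) / (x - z) ^ Suc (Suc m)"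
      using deriv_cong_ev[OF ev(1) refl] DERIV_imp_deriv by metis
    have dGx: "deriv G x = deriv Gh x"
      by (rule deriv_cong_ev[OF ev(2) refl])
    show "W k x = (x - z) ^ Suc (Suc m) * Bexpr F G k x"
    proof -
      have Fx: "F x = c x / (x - z) ^ Suc m" and Gx: "G x = Gh x" using eq x by auto
      have "k = 0 \<or> k = 1 \<or> k = 2 \<or> k \<ge> 3" by linarith
      have a1: "e ^ Suc (Suc m) * (a / e ^ Suc m * b - 1/2 * g * (d / e ^ Suc (Suc m))) = e * a * b - 1/2 * g * d"
        if "e \<noteq> 0" for e a b g d :: complex
        using that by (simp add: field_simps)
      have a3: "e ^ Suc (Suc m) * (1/2 * (d / e ^ Suc (Suc m))) = 1/2 * d"
        if "e \<noteq> 0" for e d :: complex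
        using that by (simp add: field_simps)
      have B1: "Bexpr F G 1 x = c x / (x - z) ^ Suc m * deriv Gh x - 1/2 * Gh x * ((deriv c x * (x - z) - K * c x) / (x - z) ^ Suc (Suc m))"
        by (simp add: Bexpr_def Fx dFx dGx Gx)
      have W1: "W 1 x = (x - z) * c x * deriv Gh x - 1/2 * Gh x * (deriv c x * (x - z) - K * c x)"
        by (simp add: W_def)
      have B3: "Bexpr F G 3 x = 1/2 * ((deriv c x * (x - z) - K * c x) / (x - z) ^ Suc (Suc m))"
        by (simp add: Bexpr_def dFx)
      have W3: "W 3 x = 1/2 * (deriv c x * (x - z) - K * c x)"
        by (simp add: W_def)
      have "k = 0 \<or> k = 1 \<or> k = 2 \<or> k \<ge> 3" by linarith
      moreover have "W 1 x = (x - z) ^ Suc (Suc m) * Bexpr F G 1 x"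
        unfolding B1 W1 a1[OF xz] ..
      moreover have "W 3 x = (x - z) ^ Suc (Suc m) * Bexpr F G 3 x"
        unfolding B3 W3 a3[OF xz] ..
      moreover have "W k x = W 3 x" "Bexpr F G k x = Bexpr F G 3 x" if "k \<ge> 3"
        using that by (auto simp: W_def Bexpr_def)
      ultimately show ?thesis
        by (elim disjE) (auto simp: W_def Bexpr_def dGx Gx)
    qed
  qed
  have D3: "deriv (W 3) z = 1/2 * (deriv c z - K * deriv c z)"
    unfolding W_def
    by (rule DERIV_imp_deriv) (auto intro!: derivative_eq_intros DD[OF dF(1) z] DD[OF hc z])
  have D1: "deriv (W 1) z = c z * deriv Gh z - 1/2 * (deriv Gh z * (- K * c z) + Gh z * (deriv c z - K * deriv c z))"
    unfolding W_def
    by (rule DERIV_imp_deriv)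
      (auto intro!: derivative_eq_intros DD[OF dF(1) z] DD[OF hc z] DD[OF hG z] DD[OF dF(2) z]
         simp: field_simps)
  have m: "W 3 z * deriv (W 1) z - W 1 z * deriv (W 3) z = - (1/4) * K * (K + 2) * c z ^ 2 * deriv Gh z"
    unfolding D1 D3 by (simp add: W_def algebra_simps power2_eq_square)
  have "K + 2 = of_nat (Suc m + 2)" unfolding K_def by simp
  hence "K + 2 \<noteq> 0" by (metis of_nat_eq_0_iff add_is_0 Zero_not_Suc)
  moreover have "K \<noteq> 0" unfolding K_def by (metis of_nat_eq_0_iff Zero_not_Suc)
  ultimately have "K \<noteq> 0" "K + 2 \<noteq> 0" by auto
  hence mn: "W 3 z * deriv (W 1) z - W 1 z * deriv (W 3) z \<noteq> 0"
    unfolding m using cz d by simp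
  show ?thesis unfolding imm_minor_def
    apply (rule exI[of _ r], intro conjI, fact r)
    apply (rule exI[of _ W], rule exI[of _ "\<lambda>x. (x - z) ^ Suc (Suc m)"])
    using hol eqv mn by (intro conjI; (intro exI[of _ 3] exI[of _ 1])?) auto
qed



lemma caseA:
  assumes mF: "F meromorphic_on {z}" and r: "r > 0" and hG: "Gh holomorphic_on ball z r"
    and d: "deriv Gh z \<noteq> 0" and eqG: "\<forall>x\<in>ball z r - {z}. G x = Gh x"
  shows "imm_minor 3 (Bexpr F G) z"
proof -
  have iso: "isolated_singularity_at F z" and ness: "not_essential F z"
    using mF meromorphic_at_iff by auto
  obtain r1 where r1: "r1 > 0" "F analytic_on ball z r1 - {z}"
    using iso unfolding isolated_singularity_at_def by auto
  have hF: "F holomorphic_on ball z r1 - {z}"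
    using r1(2) analytic_imp_holomorphic by blast
  from ness obtain l where "F \<midarrow>z\<rightarrow> l \<or> is_pole F z"
    unfolding not_essential_def by auto
  thus ?thesis
  proof
    assume lim: "F \<midarrow>z\<rightarrow> l"
    define Fh where "Fh = (\<lambda>y. if y = z then l else F y)"
    have "Fh holomorphic_on ball z r1"
      unfolding Fh_def by (rule removable_singularity[OF hF _ lim]) auto
    hence h1: "Fh holomorphic_on ball z (min r r1)"
      by (rule holomorphic_on_subset) auto
    have h2: "Gh holomorphic_on ball z (min r r1)"
      using hG by (rule holomorphic_on_subset) auto
    show ?thesis
      by (rule caseA_hol[OF _ h1 h2 d]) (use r r1 eqG in \<open>auto simp: Fh_def\<close>)
  next
    assume pole: "is_pole F z"
    define n where "n = zorder F z"
    define g where "g = zor_poly F z"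
    have "n < 0 \<and> g z \<noteq> 0 \<and> (\<exists>r. r>0 \<and> cball z r \<subseteq> ball z r1 \<and> g holomorphic_on cball z r
       \<and> (\<forall>w\<in>cball z r - {z}. F w  = g w / (w-z) ^ nat (- n) \<and> g w \<noteq>0))"
      unfolding n_def g_def by (rule zorder_exist_pole[OF hF _ _ pole]) (use r1 in auto)
    then obtain r2 where n: "n < 0" and gz: "g z \<noteq> 0" and r2: "r2 > 0" "g holomorphic_on cball z r2"
      and eqF: "\<forall>w\<in>cball z r2 - {z}. F w  = g w / (w-z) ^ nat (- n)" by blast
    define m where "m = nat (- n) - 1"
    have nm: "nat (- n) = Suc m" unfolding m_def using n by simp
    have h1: "g holomorphic_on ball z (min r r2)"
      using r2(2) by (rule holomorphic_on_subset) auto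
    have h2: "Gh holomorphic_on ball z (min r r2)"
      using hG by (rule holomorphic_on_subset) auto
    show ?thesis
      by (rule caseA_pole[OF _ h1 h2 d gz]) (use r r2 eqG eqF nm in auto)
  qed
qed



lemma caseB:
  assumes mF: "F meromorphic_on {z}" and r: "r > 0" and hp: "p holomorphic_on ball z r"
    and dp: "deriv p z \<noteq> 0"
    and eqG: "\<forall>x\<in>ball z r - {z}. p x \<noteq> 0 \<and> G x = 1 / p x"
  shows "imm_minor 3 (Bexpr F G) z"
proof -
  define Ft where "Ft = (\<lambda>x. F x * p x ^ 2)"
  define Gt where "Gt = (\<lambda>x. - p x)"
  have o: "open (ball z r)" by simp
  have z: "z \<in> ball z r" using r by simp
  have "p analytic_on ball z r" by (simp add: analytic_on_open hp)
  hence "p analytic_on {z}" by (rule analytic_on_subset) (use z in auto)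
  hence "p meromorphic_on {z}" by (rule analytic_on_imp_meromorphic_on)
  hence mFt: "Ft meromorphic_on {z}" unfolding Ft_def
    by (intro meromorphic_intros mF)
  have hGt: "Gt holomorphic_on ball z r" unfolding Gt_def using hp by (auto intro!: holomorphic_intros)
  have pdiff: "p field_differentiable at z" using holomorphic_on_imp_differentiable_at[OF hp o z] .
  have dGt: "deriv Gt z \<noteq> 0" unfolding Gt_def using dp pdiff by simp
  have "imm_minor 3 (Bexpr Ft Gt) z"
    by (rule caseA[OF mFt r hGt dGt]) simp
  then obtain r' w h a b where r': "r' > 0" and hol: "\<forall>k\<le>3. w k holomorphic_on ball z r'"
    and eqw: "\<forall>x\<in>ball z r' - {z}. \<forall>k\<le>3. w k x = h x * Bexpr Ft Gt k x"
    and ab: "a \<le> 3" "b \<le> 3" and m: "w a z * deriv (w b) z - w b z * deriv (w a) z \<noteq> 0"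
    unfolding imm_minor_def by blast
  have iso: "isolated_singularity_at F z"
    using mF meromorphic_at_iff by auto
  obtain r1 where r1: "r1 > 0" "F analytic_on ball z r1 - {z}"
    using iso unfolding isolated_singularity_at_def by auto
  have hF: "F holomorphic_on ball z r1 - {z}"
    using r1(2) analytic_imp_holomorphic by blast
  define R where "R = min r (min r' r1)"
  have R: "R > 0" using r r' r1 by (simp add: R_def)
  define \<pi> :: "nat \<Rightarrow> nat" where "\<pi> k = (k + 2) mod 4" for k
  define s :: "nat \<Rightarrow> complex" where "s k = (if k < 2 then -1 else 1)" for k
  define W where "W k = (\<lambda>x. s k * w (\<pi> k) x)" for k
  have \<pi>3: "\<pi> k \<le> 3" for k unfolding \<pi>_def by simp
  have \<pi>\<pi>: "\<pi> (\<pi> k) = k" if "k \<le> 3" for k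
    using that unfolding \<pi>_def by (cases k; cases "k - 1"; cases "k - 2"; auto)
  have s2: "s k * s k = 1" for k unfolding s_def by auto
  have holW: "\<forall>k\<le>3. W k holomorphic_on ball z R"
  proof (intro allI impI)
    fix k :: nat assume "k \<le> 3"
    have "w (\<pi> k) holomorphic_on ball z r'" using hol \<pi>3 by blast
    hence "w (\<pi> k) holomorphic_on ball z R" by (rule holomorphic_on_subset) (auto simp: R_def)
    thus "W k holomorphic_on ball z R" unfolding W_def by (auto intro!: holomorphic_intros)
  qed
  have rel: "s k * Bexpr Ft Gt (\<pi> k) x = p x ^ 3 * Bexpr F G k x"
    if x: "x \<in> ball z R - {z}" and k: "k \<le> 3" for x k
  proof -
    have xr: "x \<in> ball z r - {z}" and xr1: "x \<in> ball z r1 - {z}" using x by (auto simp: R_def)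
    have px: "p x \<noteq> 0" and Gx: "G x = 1 / p x" using eqG xr by auto
    have Dp: "(p has_field_derivative deriv p x) (at x)"
      using holomorphic_derivI[OF hp o] xr by auto
    have DF: "(F has_field_derivative deriv F x) (at x)"
      using holomorphic_derivI[OF hF _ xr1] by auto
    have ev: "eventually (\<lambda>y. G y = 1 / p y) (nhds x)"
      using ball_minus_nhds[OF xr] by (auto elim!: eventually_mono simp: eqG)
    have "((\<lambda>y. 1 / p y) has_field_derivative - deriv p x / (p x * p x)) (at x)"
      using DERIV_divide[OF DERIV_const[of 1] Dp px] by simp
    hence dG: "deriv G x = - deriv p x / (p x * p x)"
      using deriv_cong_ev[OF ev refl] DERIV_imp_deriv by metis
    have dGt: "deriv Gt x = - deriv p x"
      unfolding Gt_def by (rule DERIV_imp_deriv) (auto intro!: derivative_eq_intros Dp)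
    have dFt: "deriv Ft x = deriv F x * p x ^ 2 + F x * (2 * p x * deriv p x)"
      unfolding Ft_def by (rule DERIV_imp_deriv)
        (auto intro!: derivative_eq_intros Dp DF simp: power2_eq_square algebra_simps)
    have Gtx: "Gt x = - p x" and Ftx: "Ft x = F x * p x ^ 2" by (simp_all add: Gt_def Ft_def)
    have "k = 0 \<or> k = 1 \<or> k = 2 \<or> k = 3" using k by linarith
    thus ?thesis
      using px
      by (elim disjE)
        (simp_all add: s_def \<pi>_def Bexpr_def dG dGt dFt Gx Gtx Ftx field_simps power2_eq_square
          power3_eq_cube)
  qed
  have eqW: "\<forall>x\<in>ball z R - {z}. \<forall>k\<le>3. W k x = (h x * p x ^ 3) * Bexpr F G k x"
  proof (intro ballI allI impI)
    fix x k assume x: "x \<in> ball z R - {z}" and k: "k \<le> (3::nat)"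
    have "x \<in> ball z r' - {z}" using x by (auto simp: R_def)
    hence "w (\<pi> k) x = h x * Bexpr Ft Gt (\<pi> k) x" using eqw \<pi>3 by blast
    thus "W k x = (h x * p x ^ 3) * Bexpr F G k x"
      unfolding W_def using rel[OF x k] by (metis mult.left_commute mult.assoc)
  qed
  have zr': "z \<in> ball z r'" using r' by simp
  have dW: "deriv (W (\<pi> j)) z = s (\<pi> j) * deriv (w j) z" if "j \<le> 3" for j
    unfolding W_def \<pi>\<pi>[OF that]
    by (rule deriv_cmult) (rule holomorphic_on_imp_differentiable_at[OF _ _ zr'], use hol that in auto)
  have WW: "W (\<pi> j) z = s (\<pi> j) * w j z" if "j \<le> 3" for j
    unfolding W_def \<pi>\<pi>[OF that] ..
  have "W (\<pi> a) z * deriv (W (\<pi> b)) z - W (\<pi> b) z * deriv (W (\<pi> a)) z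
      = s (\<pi> a) * s (\<pi> b) * (w a z * deriv (w b) z - w b z * deriv (w a) z)"
    unfolding dW[OF ab(1)] dW[OF ab(2)] WW[OF ab(1)] WW[OF ab(2)] by (simp add: algebra_simps)
  moreover have "s (\<pi> a) * s (\<pi> b) \<noteq> 0" unfolding s_def by auto
  ultimately have mW: "W (\<pi> a) z * deriv (W (\<pi> b)) z - W (\<pi> b) z * deriv (W (\<pi> a)) z \<noteq> 0"
    using m by simp
  have ex: "\<exists>a'\<le>3. \<exists>b'\<le>3. W a' z * deriv (W b') z - W b' z * deriv (W a') z \<noteq> 0"
    using mW \<pi>3 by blast
  show ?thesis unfolding imm_minor_def
    apply (rule exI[of _ R], rule conjI, rule R)
    apply (rule exI[of _ W], rule exI[of _ "\<lambda>x. h x * p x ^ 3"])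
    apply (intro conjI)
      apply (rule holW)
     apply (rule eqW)
    apply (rule ex)
    done
qed



lemma nz_nhd:
  assumes "w holomorphic_on ball z r" "r > 0" "w z \<noteq> 0"
  shows "\<exists>r1>0. r1 \<le> r \<and> (\<forall>x\<in>ball z r1. w x \<noteq> 0)"
proof -
  have "continuous (at z) w"
    using assms holomorphic_on_imp_continuous_on continuous_on_eq_continuous_at
    by (metis centre_in_ball open_ball)
  then obtain e where e: "e > 0" "\<forall>y. dist z y < e \<longrightarrow> w y \<noteq> 0"
    using continuous_at_avoid assms(3) by metis
  show ?thesis using e assms(2)
    by (intro exI[of _ "min r e"]) auto
qed

lemma self_div_deriv:
  assumes "w holomorphic_on ball z r" "r > 0" "w z \<noteq> 0"
  shows "deriv (\<lambda>x. w x / w x) z = 0"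
proof -
  obtain r1 where r1: "r1 > 0" "\<forall>x\<in>ball z r1. w x \<noteq> 0" using nz_nhd[OF assms] by blast
  have "eventually (\<lambda>x. x \<in> ball z r1) (nhds z)" using r1 by (intro eventually_nhds_in_open) auto
  hence "eventually (\<lambda>x. w x / w x = 1) (nhds z)"
    by (rule eventually_mono) (use r1 in auto)
  hence "deriv (\<lambda>x. w x / w x) z = deriv (\<lambda>_. 1) z" by (rule deriv_cong_ev) simp
  thus ?thesis by simp
qed

lemma simple_zero_nhd:
  assumes "p holomorphic_on ball z r" "r > 0" "p z = 0" "deriv p z \<noteq> 0"
  shows "\<exists>r1>0. r1 \<le> r \<and> (\<forall>x\<in>ball z r1 - {z}. p x \<noteq> 0)"
proof -
  have "(p has_field_derivative deriv p z) (at z)"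
    using holomorphic_derivI[OF assms(1)] assms(2) by auto
  hence "((\<lambda>y. (p y - p z) / (y - z)) \<longlongrightarrow> deriv p z) (at z)"
    by (simp add: has_field_derivative_iff)
  hence "eventually (\<lambda>y. (p y - p z) / (y - z) \<noteq> 0) (at z)"
    using tendsto_imp_eventually_ne assms(4) by blast
  then obtain d where d: "d > 0" "\<forall>x. x \<noteq> z \<and> dist x z < d \<longrightarrow> (p x - p z) / (x - z) \<noteq> 0"
    unfolding eventually_at by auto
  show ?thesis using d assms(2,3)
    by (intro exI[of _ "min r d"]) (auto simp: dist_commute)
qed

theorem lemma3p3:
  fixes M :: "'a topology" and A :: "('a set \<times> ('a \<Rightarrow> complex)) set"
    and f g :: "'a \<Rightarrow> complex"
  assumes "riemann_surface M A"
    and "meromorphic_fun M A f" and "meromorphic_fun M A g"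
    and "merom_immersion M A 1 (cp1_coords g)"
  shows "merom_immersion M A 3 (B_coords f g)"
proof -
  have main: "merom_immersion_at 3 (B_coords f g U \<phi>) (\<phi> q)" if UA: "(U, \<phi>) \<in> A" and qU: "q \<in> U" for U \<phi> q
  proof -
    define z where "z = \<phi> q"
    define F where "F = in_chart U \<phi> f"
    define G where "G = in_chart U \<phi> g"
    have "F meromorphic_on \<phi> ` U" using assms(2) UA unfolding meromorphic_fun_def F_def by auto
    hence mF: "F meromorphic_on {z}" by (rule meromorphic_on_subset) (use qU z_def in auto)
    have "merom_immersion_at 1 (cp1_coords g U \<phi>) z"
      using assms(4) UA qU unfolding merom_immersion_def z_def by auto
    then obtain r w h where r: "r > 0" and hw: "\<forall>k\<le>1. w k holomorphic_on ball z r"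
      and eqw: "\<forall>x\<in>ball z r - {z}. \<forall>k\<le>1. w k x = h x * cp1_coords g U \<phi> k x"
      and ex: "\<exists>k\<le>1. w k z \<noteq> 0"
      and cond: "\<forall>i\<le>1. w i z \<noteq> 0 \<longrightarrow> (\<exists>j\<le>1. deriv (\<lambda>x. w j x / w i x) z \<noteq> 0)"
      unfolding merom_immersion_at_def by blast
    have h0: "w 0 holomorphic_on ball z r" and h1: "w 1 holomorphic_on ball z r" using hw by auto
    have eq0: "w 0 x = h x * G x" and eq1: "w 1 x = h x" if "x \<in> ball z r - {z}" for x
      using eqw that by (auto simp: cp1_coords_def G_def)
    have "imm_minor 3 (Bexpr F G) z"
    proof (cases "w 1 z = 0")
      case False
      obtain r1 where r1: "r1 > 0" "r1 \<le> r" "\<forall>x\<in>ball z r1. w 1 x \<noteq> 0"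
        using nz_nhd[OF h1 r False] by blast
      define Gh where "Gh = (\<lambda>x. w 0 x / w 1 x)"
      have sub: "ball z r1 \<subseteq> ball z r" using r1 by auto
      have hGh: "Gh holomorphic_on ball z r1" unfolding Gh_def
        using holomorphic_on_subset[OF h0 sub] holomorphic_on_subset[OF h1 sub] r1(3)
        by (intro holomorphic_intros) auto
      obtain j where j: "j \<le> 1" "deriv (\<lambda>x. w j x / w 1 x) z \<noteq> 0" using cond False by auto
      have "j \<noteq> 1" using j self_div_deriv[OF h1 r False] by auto
      hence "j = 0" using j by auto
      hence dG: "deriv Gh z \<noteq> 0" using j unfolding Gh_def by simp
      have eqG: "\<forall>x\<in>ball z r1 - {z}. G x = Gh x"
      proof
        fix x assume x: "x \<in> ball z r1 - {z}"
        hence x': "x \<in> ball z r - {z}" using sub by auto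
        have "h x \<noteq> 0" using eq1[OF x'] r1(3) x by auto
        thus "G x = Gh x" unfolding Gh_def using eq0[OF x'] eq1[OF x'] by simp
      qed
      show ?thesis by (rule caseA[OF mF r1(1) hGh dG eqG])
    next
      case True
      have w0: "w 0 z \<noteq> 0" using ex True by (auto simp: le_Suc_eq)
      obtain r1 where r1: "r1 > 0" "r1 \<le> r" "\<forall>x\<in>ball z r1. w 0 x \<noteq> 0"
        using nz_nhd[OF h0 r w0] by blast
      define p where "p = (\<lambda>x. w 1 x / w 0 x)"
      have sub: "ball z r1 \<subseteq> ball z r" using r1 by auto
      have hp: "p holomorphic_on ball z r1" unfolding p_def
        using holomorphic_on_subset[OF h0 sub] holomorphic_on_subset[OF h1 sub] r1(3)
        by (intro holomorphic_intros) auto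
      have pz: "p z = 0" unfolding p_def using True by simp
      obtain j where j: "j \<le> 1" "deriv (\<lambda>x. w j x / w 0 x) z \<noteq> 0" using cond w0 by auto
      have "j \<noteq> 0"
      proof
        assume j0: "j = 0"
        from j(2) have "deriv (\<lambda>x. w 0 x / w 0 x) z \<noteq> 0" unfolding j0 .
        thus False using self_div_deriv[OF h0 r w0] by (rule notE)
      qed
      hence "j = 1" using j by auto
      hence dp: "deriv p z \<noteq> 0" using j unfolding p_def by simp
      obtain r2 where r2: "r2 > 0" "r2 \<le> r1" "\<forall>x\<in>ball z r2 - {z}. p x \<noteq> 0"
        using simple_zero_nhd[OF hp r1(1) pz dp] by blast
      have hp2: "p holomorphic_on ball z r2" using hp by (rule holomorphic_on_subset) (use r2 in auto)
      have eqG: "\<forall>x\<in>ball z r2 - {z}. p x \<noteq> 0 \<and> G x = 1 / p x"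
      proof
        fix x assume x: "x \<in> ball z r2 - {z}"
        hence x': "x \<in> ball z r - {z}" and x1: "x \<in> ball z r1" using r1(2) r2(2) by auto
        have px: "p x \<noteq> 0" using r2(3) x by auto
        have w0x: "w 0 x \<noteq> 0" using r1(3) x1 by auto
        have "w 1 x \<noteq> 0" using px unfolding p_def by auto
        hence "h x \<noteq> 0" using eq1[OF x'] by simp
        hence "G x = w 0 x / w 1 x" using eq0[OF x'] eq1[OF x'] by simp
        thus "p x \<noteq> 0 \<and> G x = 1 / p x" using px w0x unfolding p_def by simp
      qed
      show ?thesis by (rule caseB[OF mF r2(1) hp2 dp eqG])
    qed
    hence "merom_immersion_at 3 (Bexpr F G) z" by (rule imm_minor_imp)
    thus ?thesis unfolding B_coords_eq F_def G_def z_def .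
  qed
  show ?thesis unfolding merom_immersion_def using main by auto
qed

end
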